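(* Let $n\ge2$, $\alpha\in[0,\pi/2)$, $A,B,C,D\in\Pi_{s,\alpha}^n$, $q\in\mathbb{C}$ with $0<|q|\le1$, and $f\in\mathcal{F}$. If $\mathcal{R}(A)\le\mathcal{R}(C)$ and $\mathcal{R}(B)\le\mathcal{R}(D)$, then \[ |q|\,w_q(A\sigma_fB)\le\sec^3(\alpha)\,w_q(C\sigma_fD). \]
   Context: For $\alpha\in[0,\pi/2)$, $S_\alpha=\{z\in\mathbb{C}:\operatorname{Re}z>0,\ |\operatorname{Im}z|\le\tan(\alpha)\operatorname{Re}z\}$, and $\Pi_{s,\alpha}^n$ is the set of $n\times n$ complex matrices whose numerical range is contained in $S_\alpha$. $\mathcal{R}(X)=\frac{X+X^*}{2}$, and $\le$ is the Loewner order. $\mathcal{F}$ is the set of operator monotone $f:(0,\infty)\to(0,\infty)$ with $f(1)=1$, each with a probability measure $\nu_f$ on $[0,1]$ such that $f(x)=\int_0^1((1-s)+sx^{-1})^{-1}d\nu_f(s)$. For accretive $X,Y$, $X!_sY=((1-s)X^{-1}+sY^{-1})^{-1}$ and $X\sigma_fY=\int_0^1(X!_sY)\,d\nu_f(s)$. $w_q(X)=\sup\{|\langle Xx,y\rangle|:\|x\|=\|y\|=1,\ \langle x,y\rangle=q\}$. *)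

theory Defs
  imports "HOL-Probability.Probability"
begin

type_synonym ('n) cmat = "complex ^ 'n ^ 'n"

definition cinner :: "complex ^ ('n::finite) \<Rightarrow> complex ^ 'n \<Rightarrow> complex" where
  "cinner x y = (\<Sum>i\<in>UNIV. x $ i * cnj (y $ i))"

definition adjoint_mat :: "('n::finite) cmat \<Rightarrow> ('n::finite) cmat" where
  "adjoint_mat X = (\<chi> i j. cnj (X $ j $ i))"

definition realpart_mat :: "('n::finite) cmat \<Rightarrow> ('n::finite) cmat" where
  "realpart_mat X = (\<chi> i j. (X $ i $ j + cnj (X $ j $ i)) / 2)"

definition numerical_range :: "('n::finite) cmat \<Rightarrow> complex set" where
  "numerical_range X = {cinner (X *v x) x | x. norm x = 1}"

definition sector :: "real \<Rightarrow> complex set" where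
  "sector \<alpha> = {z. 0 < Re z \<and> \<bar>Im z\<bar> \<le> tan \<alpha> * Re z}"

definition Pi_sector :: "real \<Rightarrow> ('n::finite) cmat set" where
  "Pi_sector \<alpha> = {X. numerical_range X \<subseteq> sector \<alpha>}"

definition psd :: "('n::finite) cmat \<Rightarrow> bool" where
  "psd M \<longleftrightarrow> (\<forall>x. Im (cinner (M *v x) x) = 0 \<and> 0 \<le> Re (cinner (M *v x) x))"

definition loewner_le :: "('n::finite) cmat \<Rightarrow> ('n::finite) cmat \<Rightarrow> bool" where
  "loewner_le H K \<longleftrightarrow> psd (K - H)"

definition unitary_mat :: "('n::finite) cmat \<Rightarrow> bool" where
  "unitary_mat U \<longleftrightarrow> adjoint_mat U ** U = mat 1"

definition diag_mat :: "('n \<Rightarrow> complex) \<Rightarrow> ('n::finite) cmat" where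
  "diag_mat d = (\<chi> i j. if i = j then d i else 0)"

text \<open>Operator monotonicity of f on positive definite n x n matrices, with the
  functional calculus f(U diag(d) U^*) = U diag(f o d) U^*.\<close>
definition operator_monotone_dim :: "(real \<Rightarrow> real) \<Rightarrow> ('n::finite) itself \<Rightarrow> bool" where
  "operator_monotone_dim f _ \<longleftrightarrow>
     (\<forall>(U::'n cmat) V (d::'n \<Rightarrow> real) e.
        unitary_mat U \<and> unitary_mat V \<and> (\<forall>i. 0 < d i \<and> 0 < e i) \<and>
        loewner_le (U ** diag_mat (\<lambda>i. complex_of_real (d i)) ** adjoint_mat U)
                   (V ** diag_mat (\<lambda>i. complex_of_real (e i)) ** adjoint_mat V)
        \<longrightarrow> loewner_le (U ** diag_mat (\<lambda>i. complex_of_real (f (d i))) ** adjoint_mat U)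
                       (V ** diag_mat (\<lambda>i. complex_of_real (f (e i))) ** adjoint_mat V))"

definition harm_mean :: "real \<Rightarrow> ('n::finite) cmat \<Rightarrow> ('n::finite) cmat \<Rightarrow> ('n::finite) cmat" where
  "harm_mean s X Y = matrix_inv ((1 - s) *\<^sub>R matrix_inv X + s *\<^sub>R matrix_inv Y)"

definition matrix_mean :: "real measure \<Rightarrow> ('n::finite) cmat \<Rightarrow> ('n::finite) cmat \<Rightarrow> ('n::finite) cmat" where
  "matrix_mean \<nu> X Y = integral\<^sup>L \<nu> (\<lambda>s. harm_mean s X Y)"

definition q_numerical_radius :: "complex \<Rightarrow> ('n::finite) cmat \<Rightarrow> real" where
  "q_numerical_radius q X =
     Sup {cmod (cinner (X *v x) y) | x y. norm x = 1 \<and> norm y = 1 \<and> cinner x y = q}"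

end

theory Submission
  imports Defs
begin

lemma cinner_add_left: "cinner (x + y) z = cinner x z + cinner y z"
  by (simp add: cinner_def distrib_right sum.distrib)
lemma cinner_add_right: "cinner x (y + z) = cinner x y + cinner x z"
  by (simp add: cinner_def distrib_left sum.distrib)
lemma cinner_diff_left: "cinner (x - y) z = cinner x z - cinner y z"
  by (simp add: cinner_def left_diff_distrib sum_subtractf)
lemma cinner_diff_right: "cinner x (y - z) = cinner x y - cinner x z"
  by (simp add: cinner_def right_diff_distrib sum_subtractf)
lemma cinner_smult_left: "cinner (c *s x) y = c * cinner x y"
  by (simp add: cinner_def sum_distrib_left mult_ac)
lemma cinner_smult_right: "cinner x (c *s y) = cnj c * cinner x y"
  by (simp add: cinner_def sum_distrib_left mult_ac)
lemma sR_c: "r *\<^sub>R (z::complex) = of_real r * z" by (simp add: scaleR_conv_of_real)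

lemma cinner_scaleR_left: "cinner (r *\<^sub>R x) y = of_real r * cinner x y"
  by (simp add: cinner_def sum_distrib_left mult_ac sR_c)
lemma cinner_scaleR_right: "cinner x (r *\<^sub>R y) = of_real r * cinner x y"
  by (simp add: cinner_def sum_distrib_left mult_ac sR_c)
lemma cinner_commute: "cinner y x = cnj (cinner x y)"
  by (simp add: cinner_def mult.commute)
lemma cinner_zero_left[simp]: "cinner 0 y = 0" by (simp add: cinner_def)
lemma cinner_zero_right[simp]: "cinner x 0 = 0" by (simp add: cinner_def)

lemma cinner_self: "cinner x x = of_real ((norm x)^2)"
proof -
  have "cinner x x = (\<Sum>i\<in>UNIV. of_real ((cmod (x$i))^2))"
    unfolding cinner_def by (simp add: complex_norm_square del: of_real_power)
  also have "\<dots> = of_real (\<Sum>i\<in>UNIV. (cmod (x$i))^2)" by simp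
  also have "(\<Sum>i\<in>UNIV. (cmod (x$i))^2) = (norm x)^2"
    by (simp add: norm_vec_def L2_set_def sum_nonneg)
  finally show ?thesis .
qed

lemma Re_cinner_self: "Re (cinner x x) = (norm x)^2" by (simp add: cinner_self)
lemma Im_cinner_self: "Im (cinner x x) = 0" by (simp add: cinner_self)

lemma mv_smult: "(X::complex^'n^'m) *v (c *s x) = c *s (X *v x)"
  by (rule vector_scalar_commute)
lemma mv_scaleR: "(X::complex^'n^'m) *v (r *\<^sub>R x) = r *\<^sub>R (X *v x)"
  by (simp add: matrix_vector_mult_def vec_eq_iff sR_c sum_distrib_left mult_ac)
lemma scaleR_mv: "((r *\<^sub>R X)::complex^'n^'m) *v x = r *\<^sub>R (X *v x)"
  by (simp add: matrix_vector_mult_def vec_eq_iff sR_c sum_distrib_left mult_ac)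

lemma realpart_form: "cinner (realpart_mat X *v v) v = of_real (Re (cinner (X *v v) v))"
proof -
  have a: "cinner (realpart_mat X *v v) v = (\<Sum>i\<in>UNIV. \<Sum>j\<in>UNIV. (X$i$j + cnj (X$j$i)) / 2 * v$j * cnj (v$i))"
    by (simp add: cinner_def realpart_mat_def matrix_vector_mult_def sum_distrib_right)
  have b: "cinner (X *v v) v = (\<Sum>i\<in>UNIV. \<Sum>j\<in>UNIV. X$i$j * v$j * cnj (v$i))"
    by (simp add: cinner_def matrix_vector_mult_def sum_distrib_right)
  have c: "(\<Sum>i\<in>UNIV. \<Sum>j\<in>UNIV. cnj (X$j$i) * v$j * cnj (v$i)) = cnj (\<Sum>i\<in>UNIV. \<Sum>j\<in>UNIV. X$i$j * v$j * cnj (v$i))"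
    by (subst sum.swap) (simp add: mult_ac)
  have "cinner (realpart_mat X *v v) v = ((\<Sum>i\<in>UNIV. \<Sum>j\<in>UNIV. X$i$j * v$j * cnj (v$i)) + (\<Sum>i\<in>UNIV. \<Sum>j\<in>UNIV. cnj (X$j$i) * v$j * cnj (v$i))) / 2"
    unfolding a by (simp add: add_divide_distrib distrib_right sum.distrib sum_divide_distrib)
  also have "\<dots> = (cinner (X *v v) v + cnj (cinner (X *v v) v)) / 2" using b c by simp
  also have "\<dots> = of_real (Re (cinner (X *v v) v))"
    by (simp add: complex_add_cnj)
  finally show ?thesis .
qed

lemma loewner_Re:
  assumes "loewner_le (realpart_mat A) (realpart_mat C)"
  shows "Re (cinner (A *v v) v) \<le> Re (cinner (C *v v) v)"
proof -
  have "0 \<le> Re (cinner ((realpart_mat C - realpart_mat A) *v v) v)"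
    using assms unfolding loewner_le_def psd_def by blast
  then show ?thesis
    by (simp add: matrix_vector_mult_diff_rdistrib cinner_diff_left realpart_form)
qed

definition sect :: "real \<Rightarrow> ('n::finite) cmat \<Rightarrow> bool" where
  "sect t X \<longleftrightarrow> (\<forall>v. \<bar>Im (cinner (X *v v) v)\<bar> \<le> t * Re (cinner (X *v v) v))
     \<and> (\<forall>v. v \<noteq> 0 \<longrightarrow> 0 < Re (cinner (X *v v) v))"

lemma cinner_scaleR_both: "cinner (X *v (r *\<^sub>R v)) (r *\<^sub>R v) = of_real (r^2) * cinner (X *v v) v"
  by (simp add: mv_scaleR cinner_scaleR_left cinner_scaleR_right power2_eq_square)

lemma sector_scale:
  assumes r: "0 < r" and w: "of_real r * w \<in> sector \<alpha>"
  shows "\<bar>Im w\<bar> \<le> tan \<alpha> * Re w \<and> 0 < Re w"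
proof -
  have h1: "0 < r * Re w" and h2: "\<bar>r * Im w\<bar> \<le> tan \<alpha> * (r * Re w)"
    using w unfolding sector_def by auto
  have "r * \<bar>Im w\<bar> \<le> r * (tan \<alpha> * Re w)"
    using h2 r by (simp add: abs_mult mult_ac)
  then have "\<bar>Im w\<bar> \<le> tan \<alpha> * Re w" using r by simp
  moreover have "0 < Re w" using h1 r by (simp add: zero_less_mult_iff)
  ultimately show ?thesis by blast
qed

lemma Pi_sect:
  assumes "X \<in> Pi_sector \<alpha>"
  shows "sect (tan \<alpha>) X"
proof -
  have key: "\<bar>Im (cinner (X *v v) v)\<bar> \<le> tan \<alpha> * Re (cinner (X *v v) v) \<and> 0 < Re (cinner (X *v v) v)"
    if nz: "v \<noteq> 0" for v
  proof -
    define u where "u = (1 / norm v) *\<^sub>R v"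
    define r where "r = (1 / norm v)^2"
    have nu: "norm u = 1" using nz unfolding u_def by simp
    then have "cinner (X *v u) u \<in> sector \<alpha>" using assms
      unfolding Pi_sector_def numerical_range_def by blast
    moreover have "cinner (X *v u) u = of_real r * cinner (X *v v) v"
      unfolding u_def r_def by (rule cinner_scaleR_both)
    moreover have "0 < r" using nz unfolding r_def by simp
    ultimately show ?thesis using sector_scale by metis
  qed
  show ?thesis unfolding sect_def
  proof (intro conjI allI impI)
    fix v :: "complex^'a"
    show "\<bar>Im (cinner (X *v v) v)\<bar> \<le> tan \<alpha> * Re (cinner (X *v v) v)"
      using key[of v] by (cases "v = 0") auto
  qed (use key in blast)
qed

lemma sect_inv:
  assumes "sect t X"
  shows "X ** matrix_inv X = mat 1" "matrix_inv X ** X = mat 1"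
proof -
  have "\<forall>x. X *v x = 0 \<longrightarrow> x = 0"
  proof (intro allI impI)
    fix x assume x0: "X *v x = 0"
    show "x = 0"
    proof (rule ccontr)
      assume "x \<noteq> 0"
      then have "0 < Re (cinner (X *v x) x)" using assms unfolding sect_def by blast
      then show False using x0 by simp
    qed
  qed
  then have "\<exists>B. B ** X = mat 1" by (simp add: matrix_left_invertible_ker)
  then have "invertible X" by (simp add: invertible_left_inverse)
  then have "\<exists>A'. X ** A' = mat 1 \<and> A' ** X = mat 1" unfolding invertible_def .
  then have "X ** matrix_inv X = mat 1 \<and> matrix_inv X ** X = mat 1"
    unfolding matrix_inv_def by (rule someI_ex)
  then show "X ** matrix_inv X = mat 1" "matrix_inv X ** X = mat 1" by auto
qed

lemma inv_apply:
  assumes "X ** Y = mat 1"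
  shows "X *v (Y *v v) = v"
  by (simp add: assms matrix_vector_mul_assoc)

lemma sect_inverse:
  assumes "sect t X"
  shows "sect t (matrix_inv X)"
  unfolding sect_def
proof (intro conjI allI impI)
  fix v
  let ?u = "matrix_inv X *v v"
  have xu: "X *v ?u = v" using sect_inv(1)[OF assms] by (rule inv_apply)
  have e: "cinner (matrix_inv X *v v) v = cnj (cinner (X *v ?u) ?u)"
  proof -
    have "cinner (matrix_inv X *v v) v = cinner ?u (X *v ?u)" using xu by simp
    also have "\<dots> = cnj (cinner (X *v ?u) ?u)" by (rule cinner_commute)
    finally show ?thesis .
  qed
  show "\<bar>Im (cinner (matrix_inv X *v v) v)\<bar> \<le> t * Re (cinner (matrix_inv X *v v) v)"
    using assms unfolding sect_def e by simp
  assume "v \<noteq> 0"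
  then have "?u \<noteq> 0" using xu by auto
  then show "0 < Re (cinner (matrix_inv X *v v) v)"
    using assms unfolding sect_def e by simp
qed

lemma comb_bound:
  fixes s a b p q t :: real
  assumes "0 \<le> s" "s \<le> 1" "\<bar>a\<bar> \<le> t * p" "\<bar>b\<bar> \<le> t * q"
  shows "\<bar>(1 - s) * a + s * b\<bar> \<le> t * ((1 - s) * p + s * q)"
proof -
  have "\<bar>(1 - s) * a + s * b\<bar> \<le> (1 - s) * \<bar>a\<bar> + s * \<bar>b\<bar>"
  proof -
    have "\<bar>(1 - s) * a + s * b\<bar> \<le> \<bar>(1 - s) * a\<bar> + \<bar>s * b\<bar>" by (rule abs_triangle_ineq)
    also have "\<bar>(1 - s) * a\<bar> = (1 - s) * \<bar>a\<bar>" using assms(2) by (simp add: abs_mult)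
    also have "\<bar>s * b\<bar> = s * \<bar>b\<bar>" using assms(1) by (simp add: abs_mult)
    finally show ?thesis .
  qed
  also have "\<dots> \<le> (1 - s) * (t * p) + s * (t * q)"
    using assms by (intro add_mono mult_left_mono) auto
  finally show ?thesis by (simp add: algebra_simps)
qed

lemma comb_pos:
  fixes s p q :: real
  assumes "0 \<le> s" "s \<le> 1" "0 < p" "0 < q"
  shows "0 < (1 - s) * p + s * q"
proof (cases "s = 0")
  case True then show ?thesis using assms by simp
next
  case False
  then have "0 < s * q" using assms by simp
  moreover have "0 \<le> (1 - s) * p" using assms by simp
  ultimately show ?thesis by linarith
qed

lemma sect_comb:
  assumes "sect t X" "sect t Y" "0 \<le> s" "s \<le> 1"
  shows "sect t ((1 - s) *\<^sub>R X + s *\<^sub>R Y)"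
  unfolding sect_def
proof (intro conjI allI impI)
  fix v
  have e: "cinner (((1 - s) *\<^sub>R X + s *\<^sub>R Y) *v v) v
      = of_real (1 - s) * cinner (X *v v) v + of_real s * cinner (Y *v v) v"
    by (simp add: matrix_vector_mult_add_rdistrib scaleR_mv cinner_add_left cinner_scaleR_left)
  have e1: "Im (cinner (((1 - s) *\<^sub>R X + s *\<^sub>R Y) *v v) v) = (1 - s) * Im (cinner (X *v v) v) + s * Im (cinner (Y *v v) v)"
    unfolding e by simp
  have e2: "Re (cinner (((1 - s) *\<^sub>R X + s *\<^sub>R Y) *v v) v) = (1 - s) * Re (cinner (X *v v) v) + s * Re (cinner (Y *v v) v)"
    unfolding e by simp
  have a: "\<bar>Im (cinner (X *v v) v)\<bar> \<le> t * Re (cinner (X *v v) v)"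
      "\<bar>Im (cinner (Y *v v) v)\<bar> \<le> t * Re (cinner (Y *v v) v)"
    using assms unfolding sect_def by auto
  show "\<bar>Im (cinner (((1 - s) *\<^sub>R X + s *\<^sub>R Y) *v v) v)\<bar>
      \<le> t * Re (cinner (((1 - s) *\<^sub>R X + s *\<^sub>R Y) *v v) v)"
    unfolding e1 e2 using comb_bound[OF assms(3,4) a] .
  assume "v \<noteq> 0"
  then have "0 < Re (cinner (X *v v) v)" "0 < Re (cinner (Y *v v) v)"
    using assms unfolding sect_def by auto
  then show "0 < Re (cinner (((1 - s) *\<^sub>R X + s *\<^sub>R Y) *v v) v)"
    unfolding e2 using comb_pos assms(3,4) by blast
qed

lemma h_add_l: "cinner ((X::complex^'n^'n) *v (x + y)) z = cinner (X *v x) z + cinner (X *v y) z"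
  by (simp add: matrix_vector_right_distrib cinner_add_left)
lemma h_add_r: "cinner ((X::complex^'n^'n) *v x) (y + z) = cinner (X *v x) y + cinner (X *v x) z"
  by (simp add: cinner_add_right)
lemma h_diff_l: "cinner ((X::complex^'n^'n) *v (x - y)) z = cinner (X *v x) z - cinner (X *v y) z"
  by (simp add: matrix_vector_mult_diff_distrib cinner_diff_left)
lemma h_diff_r: "cinner ((X::complex^'n^'n) *v x) (y - z) = cinner (X *v x) y - cinner (X *v x) z"
  by (simp add: cinner_diff_right)
lemma h_sR_l: "cinner ((X::complex^'n^'n) *v (r *\<^sub>R x)) z = of_real r * cinner (X *v x) z"
  by (simp add: mv_scaleR cinner_scaleR_left)
lemma h_sR_r: "cinner ((X::complex^'n^'n) *v x) (r *\<^sub>R z) = of_real r * cinner (X *v x) z"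
  by (simp add: cinner_scaleR_right)
lemma h_sm_l: "cinner ((X::complex^'n^'n) *v (c *s x)) z = c * cinner (X *v x) z"
  by (simp add: mv_smult cinner_smult_left)
lemma h_sm_r: "cinner ((X::complex^'n^'n) *v x) (c *s z) = cnj c * cinner (X *v x) z"
  by (simp add: cinner_smult_right)

lemmas h_simps = h_add_l h_add_r h_diff_l h_diff_r h_sR_l h_sR_r h_sm_l h_sm_r

lemma sect_nonneg: "sect t X \<Longrightarrow> 0 \<le> Re (cinner (X *v v) v)"
  unfolding sect_def by (cases "v = 0") (auto intro: less_imp_le)

lemma aux_lin:
  fixes a b p q tp tq T :: real
  shows "2 * (a - b) = q - p \<Longrightarrow> tp + tq = 2 * T \<Longrightarrow> \<bar>p\<bar> \<le> tp \<Longrightarrow> \<bar>q\<bar> \<le> tq \<Longrightarrow> \<bar>a - b\<bar> \<le> T"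
  by (auto simp: abs_le_iff)

lemma tau_bound:
  fixes X :: "complex^'n^'n"
  assumes "sect t X"
  shows "\<bar>Re (cinner (X *v x) y) - Re (cinner (X *v y) x)\<bar>
     \<le> t * (Re (cinner (X *v x) x) + Re (cinner (X *v y) y))"
proof -
  define P where "P = x + \<i> *s y"
  define Q where "Q = x - \<i> *s y"
  have hP: "cinner (X *v P) P = cinner (X *v x) x - \<i> * cinner (X *v x) y + \<i> * cinner (X *v y) x + cinner (X *v y) y"
    unfolding P_def by (simp only: h_simps) (simp add: algebra_simps)
  have hQ: "cinner (X *v Q) Q = cinner (X *v x) x + \<i> * cinner (X *v x) y - \<i> * cinner (X *v y) x + cinner (X *v y) y"
    unfolding Q_def by (simp only: h_simps) (simp add: algebra_simps)
  have sP: "\<bar>Im (cinner (X *v P) P)\<bar> \<le> t * Re (cinner (X *v P) P)"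
   and sQ: "\<bar>Im (cinner (X *v Q) Q)\<bar> \<le> t * Re (cinner (X *v Q) Q)"
    using assms unfolding sect_def by auto
  have "2 * (Re (cinner (X *v x) y) - Re (cinner (X *v y) x)) = Im (cinner (X *v Q) Q) - Im (cinner (X *v P) P)"
    unfolding hP hQ by simp
  moreover have "Re (cinner (X *v P) P) + Re (cinner (X *v Q) Q) = 2 * (Re (cinner (X *v x) x) + Re (cinner (X *v y) y))"
    unfolding hP hQ by simp
  then have "t * (Re (cinner (X *v P) P) + Re (cinner (X *v Q) Q)) = t * (2 * (Re (cinner (X *v x) x) + Re (cinner (X *v y) y)))"
    by simp
  then have "t * Re (cinner (X *v P) P) + t * Re (cinner (X *v Q) Q) = 2 * (t * (Re (cinner (X *v x) x) + Re (cinner (X *v y) y)))"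
    by (simp add: algebra_simps)
  ultimately show ?thesis using sP sQ aux_lin by blast
qed


lemma scalar_ineq1:
  fixes a b p l t :: real
  assumes "0 < a" "0 < b" "0 < p" "1 + t^2 \<le> a * b"
  shows "2 * l * p + t^2 * p / b \<le> a * p + b * (l^2 * p)"
proof -
  have "0 \<le> p * (b * l - 1)^2 / b" using assms by simp
  also have "p * (b * l - 1)^2 / b = b * (l^2 * p) - 2 * l * p + p / b"
    using assms by (simp add: field_simps power2_eq_square)
  finally have 1: "2 * l * p \<le> b * (l^2 * p) + p / b" by simp
  have "(1 + t^2) / b \<le> a" using assms by (simp add: divide_le_eq mult.commute)
  then have "(1 + t^2) / b * p \<le> a * p" by (rule mult_right_mono) (use assms in auto)
  moreover have "(1 + t^2) / b * p = p / b + t^2 * p / b" by (simp add: add_divide_distrib algebra_simps)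
  ultimately have 2: "p / b + t^2 * p / b \<le> a * p" by simp
  show ?thesis using 1 2 by linarith
qed

lemma scs:
  fixes X :: "complex^'n^'n"
  assumes S: "sect t X" and t: "0 \<le> t" and a: "0 < a" and b: "0 < b" and ab: "1 + t^2 \<le> a * b"
  shows "2 * Re (cinner (X *v u) w) \<le> a * Re (cinner (X *v u) u) + b * Re (cinner (X *v w) w)"
proof (cases "u = 0")
  case True
  have "0 \<le> b * Re (cinner (X *v w) w)" using b sect_nonneg[OF S] by simp
  then show ?thesis using True by simp
next
  case False
  define p where "p = Re (cinner (X *v u) u)"
  have p: "0 < p" using S False unfolding sect_def p_def by blast
  define l where "l = (Re (cinner (X *v u) w) + Re (cinner (X *v w) u)) / (2 * p)"
  define w' where "w' = w - l *\<^sub>R u"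
  define D where "D = Re (cinner (X *v u) w') - Re (cinner (X *v w') u)"
  define R where "R = Re (cinner (X *v w') w')"
  have R0: "0 \<le> R" unfolding R_def by (rule sect_nonneg[OF S])
  have e1: "cinner (X *v u) w' = cinner (X *v u) w - of_real l * cinner (X *v u) u"
    unfolding w'_def by (simp only: h_simps)
  have e2: "cinner (X *v w') u = cinner (X *v w) u - of_real l * cinner (X *v u) u"
    unfolding w'_def by (simp only: h_simps)
  have e3: "cinner (X *v w') w' = cinner (X *v w) w - of_real l * cinner (X *v w) u
      - of_real l * cinner (X *v u) w + of_real l * of_real l * cinner (X *v u) u"
    unfolding w'_def by (simp only: h_simps) (simp add: algebra_simps)
  have lp: "2 * l * p = Re (cinner (X *v u) w) + Re (cinner (X *v w) u)"
    unfolding l_def using p by simp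
  have E1: "2 * Re (cinner (X *v u) w) = 2 * l * p + D"
    unfolding D_def e1 e2 lp by simp
  have E2: "Re (cinner (X *v w) w) = l^2 * p + R"
  proof -
    have "R = Re (cinner (X *v w) w) - l * (Re (cinner (X *v w) u) + Re (cinner (X *v u) w)) + l * l * p"
      unfolding R_def e3 p_def by (simp add: algebra_simps)
    also have "l * (Re (cinner (X *v w) u) + Re (cinner (X *v u) w)) = l * (2 * l * p)"
      using lp by simp
    finally show ?thesis by (simp add: power2_eq_square)
  qed
  have Db: "\<bar>D\<bar> \<le> t^2 * p / b + b * R"
  proof (cases "t = 0")
    case True
    have "\<bar>D\<bar> \<le> t * (p + R)"
      using tau_bound[OF S, of u w'] unfolding D_def p_def R_def .
    then have "\<bar>D\<bar> \<le> 0" using True by simp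
    moreover have "0 \<le> b * R" using b R0 by simp
    ultimately show ?thesis using True by simp
  next
    case False
    then have tp: "0 < t" using t by simp
    define c where "c = t / b"
    have c: "0 < c" unfolding c_def using tp b by simp
    have "\<bar>Re (cinner (X *v (c *\<^sub>R u)) w') - Re (cinner (X *v w') (c *\<^sub>R u))\<bar>
        \<le> t * (Re (cinner (X *v (c *\<^sub>R u)) (c *\<^sub>R u)) + R)"
      using tau_bound[OF S, of "c *\<^sub>R u" w'] unfolding R_def .
    moreover have "Re (cinner (X *v (c *\<^sub>R u)) w') - Re (cinner (X *v w') (c *\<^sub>R u)) = c * D"
      unfolding D_def by (simp only: h_simps) (simp add: algebra_simps)
    moreover have "Re (cinner (X *v (c *\<^sub>R u)) (c *\<^sub>R u)) = c * c * p"
      unfolding p_def by (simp only: h_simps) simp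
    ultimately have "\<bar>c * D\<bar> \<le> t * (c * c * p + R)" by simp
    then have "c * \<bar>D\<bar> \<le> t * (c * c * p + R)" using c by (simp add: abs_mult)
    then have "c * \<bar>D\<bar> \<le> c * (t^2 * p / b + b * R)"
      unfolding c_def using b tp by (simp add: field_simps power2_eq_square)
    then show ?thesis using c by simp
  qed
  have "2 * Re (cinner (X *v u) w) \<le> 2 * l * p + (t^2 * p / b + b * R)"
    using E1 Db by linarith
  also have "\<dots> \<le> a * p + b * (l^2 * p) + b * R"
    using scalar_ineq1[OF a b p ab, of l] by linarith
  also have "\<dots> = a * Re (cinner (X *v u) u) + b * Re (cinner (X *v w) w)"
    unfolding E2 p_def by (simp add: algebra_simps)
  finally show ?thesis .
qed

lemma Re_cinner_commute: "Re (cinner x y) = Re (cinner y x)"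
  by (subst cinner_commute) simp

lemma abs_bound:
  fixes X :: "complex^'n^'n"
  assumes S: "sect t X" and t: "0 \<le> t"
  shows "cmod (cinner (X *v x) y) \<le> sqrt (1 + t^2) / 2 * (Re (cinner (X *v x) x) + Re (cinner (X *v y) y))"
proof (cases "cinner (X *v x) y = 0")
  case True
  have "0 \<le> Re (cinner (X *v x) x) + Re (cinner (X *v y) y)"
    using sect_nonneg[OF S, of x] sect_nonneg[OF S, of y] by simp
  then show ?thesis using True by simp
next
  case False
  define z where "z = cinner (X *v x) y"
  define \<beta> where "\<beta> = z / of_real (cmod z)"
  have zn: "cmod z \<noteq> 0" using False unfolding z_def by simp
  have hb: "cinner (X *v x) (\<beta> *s y) = of_real (cmod z)"
  proof -
    have "cinner (X *v x) (\<beta> *s y) = cnj \<beta> * z" unfolding z_def by (simp only: h_simps)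
    also have "\<dots> = cnj z * z / of_real (cmod z)" unfolding \<beta>_def by simp
    also have "cnj z * z = of_real ((cmod z)^2)" by (metis complex_norm_square mult.commute)
    finally show ?thesis using zn by (simp add: power2_eq_square)
  qed
  have bb: "cnj \<beta> * \<beta> = 1"
  proof -
    have "cnj \<beta> * \<beta> = cnj z * z / (of_real (cmod z) * of_real (cmod z))" unfolding \<beta>_def by simp
    also have "cnj z * z = of_real ((cmod z)^2)" by (metis complex_norm_square mult.commute)
    finally show ?thesis using zn by (simp add: power2_eq_square)
  qed
  have hyy: "cinner (X *v (\<beta> *s y)) (\<beta> *s y) = cinner (X *v y) y"
  proof -
    have "cinner (X *v (\<beta> *s y)) (\<beta> *s y) = cnj \<beta> * \<beta> * cinner (X *v y) y"
      by (simp only: h_simps) (simp add: mult_ac)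
    then show ?thesis using bb by simp
  qed
  have sp: "0 < sqrt (1 + t^2)" by (simp add: add_pos_nonneg)
  have "1 + t^2 \<le> sqrt (1 + t^2) * sqrt (1 + t^2)" by (simp add: add_nonneg_nonneg)
  from scs[OF S t sp sp this, of x "\<beta> *s y"]
  have "2 * cmod z \<le> sqrt (1 + t^2) * Re (cinner (X *v x) x) + sqrt (1 + t^2) * Re (cinner (X *v y) y)"
    unfolding hb hyy by simp
  then show ?thesis unfolding z_def by (simp add: algebra_simps)
qed

lemma comb_ineq:
  fixes s x1 x2 y1 y2 :: real
  assumes "0 \<le> s" "s \<le> 1" "x1 \<le> y1" "x2 \<le> y2"
  shows "(1 - s) * x1 + s * x2 \<le> (1 - s) * y1 + s * y2"
  using assms by (intro add_mono mult_left_mono) auto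

lemma harm_ineq:
  fixes A B C D A' B' C' D' M N H K :: "complex^'n^'n"
  assumes sA: "sect t A" and sB: "sect t B" and t: "0 \<le> t" and s: "0 \<le> s" "s \<le> 1"
    and iA: "A ** A' = mat 1" and iB: "B ** B' = mat 1"
    and iC: "C ** C' = mat 1" and iD: "D ** D' = mat 1"
    and M: "M = (1 - s) *\<^sub>R A' + s *\<^sub>R B'" and N: "N = (1 - s) *\<^sub>R C' + s *\<^sub>R D'"
    and iM: "M ** H = mat 1" and iN: "N ** K = mat 1"
    and lAC: "\<And>v. Re (cinner (A *v v) v) \<le> Re (cinner (C *v v) v)"
    and lBD: "\<And>v. Re (cinner (B *v v) v) \<le> Re (cinner (D *v v) v)"
  shows "Re (cinner (H *v x) x) \<le> (1 + t^2) * Re (cinner (K *v x) x)"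
proof -
  define k where "k = 1 + t^2"
  have k: "0 < k" "1 + t^2 \<le> 1 * k" unfolding k_def by (simp_all add: add_pos_nonneg)
  define w where "w = H *v x"
  define w' where "w' = K *v x"
  have xw: "M *v w = x" unfolding w_def by (rule inv_apply[OF iM])
  have xw': "N *v w' = x" unfolding w'_def by (rule inv_apply[OF iN])
  define a where "a = C' *v w'"
  define b where "b = D' *v w'"
  have Ca: "C *v a = w'" unfolding a_def by (rule inv_apply[OF iC])
  have Db: "D *v b = w'" unfolding b_def by (rule inv_apply[OF iD])
  have xab: "x = (1 - s) *\<^sub>R a + s *\<^sub>R b"
    using xw' unfolding N a_def b_def by (simp add: matrix_vector_mult_add_rdistrib scaleR_mv)
  define u1 where "u1 = A' *v w"
  define u2 where "u2 = B' *v w"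
  have Au1: "A *v u1 = w" unfolding u1_def by (rule inv_apply[OF iA])
  have Bu2: "B *v u2 = w" unfolding u2_def by (rule inv_apply[OF iB])
  have IA: "2 * Re (cinner w a) \<le> Re (cinner (A' *v w) w) + k * Re (cinner w' a)"
  proof -
    have "2 * Re (cinner (A *v u1) a) \<le> 1 * Re (cinner (A *v u1) u1) + k * Re (cinner (A *v a) a)"
      by (rule scs[OF sA t zero_less_one k])
    also have "Re (cinner (A *v u1) u1) = Re (cinner (A' *v w) w)"
      unfolding Au1 by (simp add: Re_cinner_commute u1_def)
    also have "k * Re (cinner (A *v a) a) \<le> k * Re (cinner w' a)"
      using lAC[of a] k unfolding Ca by simp
    finally show ?thesis unfolding Au1 by simp
  qed
  have IB: "2 * Re (cinner w b) \<le> Re (cinner (B' *v w) w) + k * Re (cinner w' b)"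
  proof -
    have "2 * Re (cinner (B *v u2) b) \<le> 1 * Re (cinner (B *v u2) u2) + k * Re (cinner (B *v b) b)"
      by (rule scs[OF sB t zero_less_one k])
    also have "Re (cinner (B *v u2) u2) = Re (cinner (B' *v w) w)"
      unfolding Bu2 by (simp add: Re_cinner_commute u2_def)
    also have "k * Re (cinner (B *v b) b) \<le> k * Re (cinner w' b)"
      using lBD[of b] k unfolding Db by simp
    finally show ?thesis unfolding Bu2 by simp
  qed
  have comb: "(1 - s) * (2 * Re (cinner w a)) + s * (2 * Re (cinner w b))
     \<le> (1 - s) * (Re (cinner (A' *v w) w) + k * Re (cinner w' a)) + s * (Re (cinner (B' *v w) w) + k * Re (cinner w' b))"
    by (rule comb_ineq[OF s IA IB])
  have e1: "Re (cinner w x) = (1 - s) * Re (cinner w a) + s * Re (cinner w b)"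
    unfolding xab by (simp add: cinner_add_right cinner_scaleR_right)
  have e2: "Re (cinner w' x) = (1 - s) * Re (cinner w' a) + s * Re (cinner w' b)"
    unfolding xab by (simp add: cinner_add_right cinner_scaleR_right)
  have e3: "Re (cinner w x) = (1 - s) * Re (cinner (A' *v w) w) + s * Re (cinner (B' *v w) w)"
  proof -
    have "Re (cinner w x) = Re (cinner x w)" by (rule Re_cinner_commute)
    also have "\<dots> = Re (cinner (M *v w) w)" using xw by simp
    also have "\<dots> = (1 - s) * Re (cinner (A' *v w) w) + s * Re (cinner (B' *v w) w)"
      unfolding M by (simp add: matrix_vector_mult_add_rdistrib scaleR_mv cinner_add_left cinner_scaleR_left)
    finally show ?thesis .
  qed
  have "2 * Re (cinner w x) \<le> Re (cinner w x) + k * Re (cinner w' x)"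
  proof -
    have c1: "(1 - s) * (2 * Re (cinner w a)) + s * (2 * Re (cinner w b)) = 2 * Re (cinner w x)"
      by (simp add: e1 algebra_simps)
    have c2: "(1 - s) * (Re (cinner (A' *v w) w) + k * Re (cinner w' a)) + s * (Re (cinner (B' *v w) w) + k * Re (cinner w' b))
        = Re (cinner w x) + k * Re (cinner w' x)"
      by (simp add: e2 e3 algebra_simps)
    show ?thesis using comb unfolding c1 c2 .
  qed
  then have "Re (cinner w x) \<le> k * Re (cinner w' x)" by simp
  then show ?thesis unfolding w_def w'_def k_def .
qed

lemma inv_entry:
  fixes X Y :: "complex^'n^'n"
  assumes XY: "X ** Y = mat 1"
  shows "Y $ k $ j = det (\<chi> i l. if l = k then (if i = j then 1 else 0) else X$i$l) / det X"
proof -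
  have "invertible X" unfolding invertible_right_inverse using XY by blast
  then have d: "det X \<noteq> 0" by (simp add: invertible_det_nz)
  define e :: "complex^'n" where "e = (\<chi> i. if i = j then 1 else 0)"
  have "X *v (Y *v e) = e" by (rule inv_apply[OF XY])
  then have "Y *v e = (\<chi> k. det (\<chi> i l. if l = k then e$i else X$i$l) / det X)"
    using cramer[OF d] by blast
  then have "(Y *v e) $ k = det (\<chi> i l. if l = k then e$i else X$i$l) / det X" by simp
  moreover have "(Y *v e) $ k = Y $ k $ j"
    unfolding e_def by (simp add: matrix_vector_mult_def if_distrib cong: if_cong)
  moreover have ei: "\<And>i. e$i = (if i = j then 1 else 0)" unfolding e_def by simp
  ultimately show ?thesis by (simp only: ei)
qed

lemma continuous_on_det:
  fixes F :: "real \<Rightarrow> complex^'n^'n"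
  assumes "\<And>i j. continuous_on S (\<lambda>s. F s $ i $ j)"
  shows "continuous_on S (\<lambda>s. det (F s))"
  unfolding det_def
  by (intro continuous_intros assms)

lemma continuous_inv_path:
  fixes P Q :: "complex^'n^'n"
  assumes inv: "\<And>s. s \<in> {0..1} \<Longrightarrow> ((1 - s) *\<^sub>R P + s *\<^sub>R Q) ** matrix_inv ((1 - s) *\<^sub>R P + s *\<^sub>R Q) = mat 1"
  shows "continuous_on {0..1} (\<lambda>s. matrix_inv ((1 - s) *\<^sub>R P + s *\<^sub>R Q))"
proof -
  define M where "M s = (1 - s) *\<^sub>R P + s *\<^sub>R Q" for s :: real
  have Mc: "continuous_on {0..1} (\<lambda>s. M s $ i $ l)" for i l
    unfolding M_def by (simp add: continuous_intros)
  have dnz: "det (M s) \<noteq> 0" if "s \<in> {0..1}" for s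
  proof -
    have "invertible (M s)" unfolding invertible_right_inverse M_def using inv[OF that] by blast
    then show ?thesis by (simp add: invertible_det_nz)
  qed
  have eq: "matrix_inv (M s) = (\<chi> k j. det (\<chi> i l. if l = k then (if i = j then 1 else 0) else M s $i$l) / det (M s))"
    if "s \<in> {0..1}" for s
    using inv_entry[OF inv[OF that, folded M_def]] by (simp add: vec_eq_iff)
  have "continuous_on {0..1} (\<lambda>s. (\<chi> k j. det (\<chi> i l. if l = k then (if i = j then 1 else 0) else M s $i$l) / det (M s)) :: complex^'n^'n)"
  proof (intro continuous_on_vec_lambda continuous_on_divide)
    fix k j
    show "continuous_on {0..1} (\<lambda>s. det (\<chi> i l. if l = k then (if i = j then 1 else 0) else M s $i$l))"
      apply (rule continuous_on_det)
      subgoal for i l by (cases "l = k") (simp_all add: Mc)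
      done
    show "continuous_on {0..1} (\<lambda>s. det (M s))"
      by (rule continuous_on_det) (rule Mc)
    show "\<forall>s\<in>{0..1}. det (M s) \<noteq> 0" using dnz by blast
  qed
  then have "continuous_on {0..1} (\<lambda>s. matrix_inv (M s))"
    by (rule continuous_on_cong[THEN iffD1, rotated 2]) (simp_all add: eq)
  then show ?thesis unfolding M_def .
qed

definition qset :: "complex \<Rightarrow> ('n::finite) cmat \<Rightarrow> real set" where
  "qset q X = {cmod (cinner (X *v x) y) | x y. norm x = 1 \<and> norm y = 1 \<and> cinner x y = q}"

lemma qnr_qset: "q_numerical_radius q X = Sup (qset q X)"
  unfolding q_numerical_radius_def qset_def ..

lemma cinner_mv_bound:
  fixes K :: "complex^'n^'n"
  assumes "norm x = 1" "norm y = 1"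
  shows "cmod (cinner (K *v x) y) \<le> (\<Sum>i\<in>UNIV. \<Sum>j\<in>UNIV. cmod (K$i$j))"
proof -
  have "cmod (cinner (K *v x) y) = cmod (\<Sum>i\<in>UNIV. \<Sum>j\<in>UNIV. K$i$j * x$j * cnj (y$i))"
    by (simp add: cinner_def matrix_vector_mult_def sum_distrib_right)
  also have "\<dots> \<le> (\<Sum>i\<in>UNIV. cmod (\<Sum>j\<in>UNIV. K$i$j * x$j * cnj (y$i)))" by (rule norm_sum)
  also have "\<dots> \<le> (\<Sum>i\<in>UNIV. \<Sum>j\<in>UNIV. cmod (K$i$j * x$j * cnj (y$i)))"
    by (intro sum_mono norm_sum)
  also have "\<dots> \<le> (\<Sum>i\<in>UNIV. \<Sum>j\<in>UNIV. cmod (K$i$j))"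
  proof (intro sum_mono)
    fix i j
    have "cmod (x$j) \<le> norm x" by (rule Finite_Cartesian_Product.norm_nth_le)
    then have "cmod (x$j) \<le> 1" using assms by simp
    moreover have "cmod (y$i) \<le> norm y" by (rule Finite_Cartesian_Product.norm_nth_le)
    then have "cmod (y$i) \<le> 1" using assms by simp
    ultimately have "cmod (x$j) * cmod (y$i) \<le> 1" by (simp add: mult_le_one)
    then have "cmod (K$i$j) * (cmod (x$j) * cmod (y$i)) \<le> cmod (K$i$j) * 1"
      by (intro mult_left_mono) auto
    then show "cmod (K$i$j * x$j * cnj (y$i)) \<le> cmod (K$i$j)"
      by (simp add: norm_mult mult_ac)
  qed
  finally show ?thesis .
qed

lemma qset_bdd: "bdd_above (qset q K)"
  unfolding qset_def by (rule bdd_aboveI[where M = "\<Sum>i\<in>UNIV. \<Sum>j\<in>UNIV. cmod (K$i$j)"]) (auto intro: cinner_mv_bound)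

lemma cinner_delta: "cinner z (\<chi> l. if l = i then 1 else 0) = z $ i"
  by (simp add: cinner_def if_distrib cong: if_cong)

lemma orth_exists:
  fixes z :: "complex^'n"
  assumes "CARD('n) \<ge> 2"
  shows "\<exists>e. norm e = 1 \<and> cinner z e = 0"
proof -
  obtain i j :: 'n where ij: "i \<noteq> j"
  proof -
    have "\<not> (\<forall>i j :: 'n. i = j)"
    proof
      assume "\<forall>i j :: 'n. i = j"
      then have "card (UNIV :: 'n set) \<le> Suc 0" by (subst card_le_Suc0_iff_eq) auto
      then show False using assms by simp
    qed
    then show ?thesis using that by blast
  qed
  define di :: "complex^'n" where "di = (\<chi> l. if l = i then 1 else 0)"
  define dj :: "complex^'n" where "dj = (\<chi> l. if l = j then 1 else 0)"
  obtain e0 where e0: "e0 \<noteq> 0" "cinner z e0 = 0"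
  proof (cases "z $ i = 0 \<and> z $ j = 0")
    case True
    have "di $ i = 1" unfolding di_def by simp
    then have "di \<noteq> 0" by auto
    moreover have "cinner z di = 0" unfolding di_def cinner_delta using True by simp
    ultimately show ?thesis using that by blast
  next
    case False
    define e1 where "e1 = cnj (z$j) *s di - cnj (z$i) *s dj"
    have "cinner z e1 = 0"
      unfolding e1_def di_def dj_def by (simp add: cinner_diff_right cinner_smult_right cinner_delta)
    moreover have "e1 \<noteq> 0"
    proof
      assume e10: "e1 = 0"
      have "e1 $ i = cnj (z$j)" "e1 $ j = - cnj (z$i)"
        unfolding e1_def di_def dj_def using ij by auto
      then show False using e10 False by simp
    qed
    ultimately show ?thesis using that by blast
  qed
  define e where "e = (1 / norm e0) *\<^sub>R e0"
  have "norm e = 1" unfolding e_def using e0 by simp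
  moreover have "cinner z e = 0" unfolding e_def by (simp add: cinner_scaleR_right e0)
  ultimately show ?thesis by blast
qed

lemma norm_eq_from_cinner:
  assumes "cinner y y = 1"
  shows "norm y = 1"
proof -
  have "(norm y)^2 = 1" using Re_cinner_self[of y] assms by simp
  then have "norm y = 1 \<or> norm y = -1" by (simp add: power2_eq_1_iff)
  then show ?thesis using norm_ge_zero[of y] by auto
qed

lemma q_vector:
  fixes z :: "complex^'n" and K :: "complex^'n^'n"
  assumes card: "CARD('n) \<ge> 2" and nz: "norm z = 1" and q: "cmod q \<le> 1"
  shows "\<exists>y. norm y = 1 \<and> cinner z y = q \<and> cmod q * cmod (cinner (K *v z) z) \<le> cmod (cinner (K *v z) y)"
proof -
  obtain e where e: "norm e = 1" "cinner z e = 0" using orth_exists[OF card] by blast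
  define r where "r = sqrt (1 - (cmod q)^2)"
  have "(cmod q)^2 \<le> 1" using q by (simp add: power_le_one)
  then have r2: "r^2 = 1 - (cmod q)^2" unfolding r_def by simp
  have zz: "cinner z z = 1" using nz by (simp add: cinner_self)
  have ee: "cinner e e = 1" using e by (simp add: cinner_self)
  have ez: "cinner e z = 0" using e by (subst cinner_commute) simp
  have good: "norm y = 1 \<and> cinner z y = q" if y: "y = cnj q *s z + (\<sigma> * r) *\<^sub>R e" and sg: "\<sigma> = 1 \<or> \<sigma> = -1" for y \<sigma>
  proof
    have ss: "\<sigma> * \<sigma> = 1" using sg by auto
    have "cinner y y = q * cnj q * cinner z z + of_real ((\<sigma> * r) * (\<sigma> * r)) * cinner e e"
      unfolding y by (simp add: cinner_add_left cinner_add_right cinner_smult_left cinner_smult_right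
          cinner_scaleR_left cinner_scaleR_right e(2) ez algebra_simps)
    also have "\<dots> = of_real ((cmod q)^2) + of_real ((\<sigma> * r) * (\<sigma> * r))"
      unfolding zz ee using complex_norm_square[of q] by (simp only: mult_1_right of_real_mult)
    also have "(\<sigma> * r) * (\<sigma> * r) = r^2" using ss by (simp add: power2_eq_square algebra_simps)
    also have "of_real ((cmod q)^2) + of_real (r^2) = (of_real ((cmod q)^2 + r^2) :: complex)" by simp
    also have "\<dots> = 1" using r2 by simp
    finally show "norm y = 1" by (rule norm_eq_from_cinner)
    show "cinner z y = q"
      unfolding y by (simp add: cinner_add_right cinner_smult_right cinner_scaleR_right e(2) zz)
  qed
  define a where "a = q * cinner (K *v z) z"
  define c where "c = of_real r * cinner (K *v z) e"
  have hy: "cinner (K *v z) (cnj q *s z + (\<sigma> * r) *\<^sub>R e) = a + of_real \<sigma> * c" for \<sigma>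
    unfolding a_def c_def by (simp add: cinner_add_right cinner_smult_right cinner_scaleR_right mult_ac)
  have "2 * cmod a \<le> cmod (a + c) + cmod (a - c)"
  proof -
    have "2 * cmod a = cmod ((a + c) + (a - c))" by (simp add: norm_mult)
    also have "\<dots> \<le> cmod (a + c) + cmod (a - c)" by (rule norm_triangle_ineq)
    finally show ?thesis .
  qed
  then have "cmod a \<le> cmod (a + c) \<or> cmod a \<le> cmod (a - c)" by linarith
  then obtain \<sigma> :: real where sg: "\<sigma> = 1 \<or> \<sigma> = -1" and big: "cmod a \<le> cmod (a + of_real \<sigma> * c)"
  proof
    assume "cmod a \<le> cmod (a + c)"
    then show ?thesis using that[of 1] by simp
  next
    assume "cmod a \<le> cmod (a - c)"
    then show ?thesis using that[of "-1"] by simp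
  qed
  define y where "y = cnj q *s z + (\<sigma> * r) *\<^sub>R e"
  have "cmod q * cmod (cinner (K *v z) z) \<le> cmod (cinner (K *v z) y)"
    unfolding y_def hy using big unfolding a_def by (simp add: norm_mult)
  then show ?thesis using good[OF y_def sg] by blast
qed

lemma qnr_lower:
  fixes z :: "complex^'n" and K :: "complex^'n^'n"
  assumes card: "CARD('n) \<ge> 2" and nz: "norm z = 1" and q: "cmod q \<le> 1"
  shows "cmod q * cmod (cinner (K *v z) z) \<le> q_numerical_radius q K"
proof -
  obtain y where y: "norm y = 1" "cinner z y = q" "cmod q * cmod (cinner (K *v z) z) \<le> cmod (cinner (K *v z) y)"
    using q_vector[OF card nz q] by blast
  have "cmod (cinner (K *v z) y) \<in> qset q K" unfolding qset_def using y nz by blast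
  then have "cmod (cinner (K *v z) y) \<le> Sup (qset q K)" by (rule cSup_upper[OF _ qset_bdd])
  then show ?thesis using y(3) unfolding qnr_qset by linarith
qed

lemma qset_nonempty:
  fixes K :: "complex^'n^'n"
  assumes card: "CARD('n) \<ge> 2" and q: "cmod q \<le> 1"
  shows "qset q K \<noteq> {}"
proof -
  obtain i :: 'n where True by blast
  define z :: "complex^'n" where "z = (\<chi> l. if l = i then 1 else 0)"
  have "cinner z z = 1" unfolding z_def cinner_delta by simp
  then have nz: "norm z = 1" by (rule norm_eq_from_cinner)
  obtain y where y: "norm y = 1" "cinner z y = q"
    using q_vector[OF card nz q] by blast
  then show ?thesis unfolding qset_def using nz by blast
qed

lemma integrable_cont:
  fixes f :: "real \<Rightarrow> 'b::{banach,second_countable_topology}"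
  assumes P: "prob_space \<nu>" and S: "sets \<nu> = sets (restrict_space borel {0..1})"
    and c: "continuous_on {0..1} f"
  shows "integrable \<nu> f"
proof -
  interpret prob_space \<nu> by (rule P)
  have sp: "space \<nu> = {0..1}" using sets_eq_imp_space_eq[OF S] by (simp add: space_restrict_space)
  have m: "f \<in> borel_measurable \<nu>"
    by (subst measurable_cong_sets[OF S refl]) (rule borel_measurable_continuous_on_restrict[OF c])
  obtain B where B: "\<forall>x\<in>{0..1}. norm (f x) \<le> B"
    using compact_imp_bounded[OF compact_continuous_image[OF c compact_Icc]] by (auto simp: bounded_iff)
  have "AE x in \<nu>. norm (f x) \<le> B" using B sp by (intro AE_I2) auto
  then show ?thesis using m by (rule integrable_const_bound)
qed

lemma bl_cinner: "bounded_linear (\<lambda>M::complex^'n^'n. cinner (M *v x) y)"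
  unfolding linear_conv_bounded_linear[symmetric]
  by (rule linearI) (simp_all add: matrix_vector_mult_add_rdistrib cinner_add_left scaleR_mv cinner_scaleR_left sR_c)

lemma sec_cube:
  assumes "0 < cos \<alpha>"
  shows "(1 / cos \<alpha>) ^ 3 = (1 + (tan \<alpha>)^2) * sqrt (1 + (tan \<alpha>)^2)"
proof -
  have e: "1 + (tan \<alpha>)^2 = (1 / cos \<alpha>)^2" using tan_sec[of \<alpha>] assms by (simp add: inverse_eq_divide)
  have "sqrt ((1 / cos \<alpha>)^2) = 1 / cos \<alpha>" using assms by simp
  then show ?thesis unfolding e by (simp add: power3_eq_cube power2_eq_square)
qed


theorem mainTheorem9:
  fixes A B C D :: "complex ^ 'n ^ 'n"
    and \<alpha> :: real and q :: complex
    and f :: "real \<Rightarrow> real" and \<nu> :: "real measure"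
  assumes "CARD('n) \<ge> 2"
    and "0 \<le> \<alpha>" and "\<alpha> < pi / 2"
    and "A \<in> Pi_sector \<alpha>" and "B \<in> Pi_sector \<alpha>"
    and "C \<in> Pi_sector \<alpha>" and "D \<in> Pi_sector \<alpha>"
    and "0 < cmod q" and "cmod q \<le> 1"
    and "\<forall>x>0. f x > 0" and "f 1 = 1"
    and "operator_monotone_dim f TYPE('n)"
    and "prob_space \<nu>" and "sets \<nu> = sets (restrict_space borel {0..1})"
    and "\<forall>x>0. f x = (\<integral>s. inverse ((1 - s) + s * inverse x) \<partial>\<nu>)"
    and "loewner_le (realpart_mat A) (realpart_mat C)"
    and "loewner_le (realpart_mat B) (realpart_mat D)"
  shows "cmod q * q_numerical_radius q (matrix_mean \<nu> A B)
           \<le> (1 / cos \<alpha>) ^ 3 * q_numerical_radius q (matrix_mean \<nu> C D)"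
proof -
  note card = assms(1) and qpos = assms(8) and q1 = assms(9) and P = assms(13) and S = assms(14)
  define t where "t = tan \<alpha>"
  have t0: "0 \<le> t"
  proof (cases "\<alpha> = 0")
    case True then show ?thesis unfolding t_def by simp
  next
    case False
    then have "0 < \<alpha>" using assms(2) by simp
    then have "0 < tan \<alpha>" using assms(3) by (rule tan_gt_zero)
    then show ?thesis unfolding t_def by simp
  qed
  have cpos: "0 < cos \<alpha>" using assms(2,3) by (intro cos_gt_zero_pi) auto
  define k where "k = 1 + t^2"
  define r where "r = sqrt k"
  have k0: "0 \<le> k" unfolding k_def by simp
  have r0: "0 \<le> r" unfolding r_def using k0 by simp
  have sec: "(1 / cos \<alpha>) ^ 3 = k * r" unfolding k_def r_def t_def using sec_cube[OF cpos] .
  have sA: "sect t A" and sB: "sect t B" and sC: "sect t C" and sD: "sect t D"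
    unfolding t_def using Pi_sect assms(4-7) by blast+
  define A' where "A' = matrix_inv A"
  define B' where "B' = matrix_inv B"
  define C' where "C' = matrix_inv C"
  define D' where "D' = matrix_inv D"
  have iA: "A ** A' = mat 1" and iB: "B ** B' = mat 1" and iC: "C ** C' = mat 1" and iD: "D ** D' = mat 1"
    unfolding A'_def B'_def C'_def D'_def using sect_inv sA sB sC sD by blast+
  have sA': "sect t A'" and sB': "sect t B'" and sC': "sect t C'" and sD': "sect t D'"
    unfolding A'_def B'_def C'_def D'_def using sect_inverse sA sB sC sD by blast+
  define Hf where "Hf s = harm_mean s A B" for s
  define Kf where "Kf s = harm_mean s C D" for s
  have Hf_eq: "Hf s = matrix_inv ((1 - s) *\<^sub>R A' + s *\<^sub>R B')" for s
    unfolding Hf_def harm_mean_def A'_def B'_def ..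
  have Kf_eq: "Kf s = matrix_inv ((1 - s) *\<^sub>R C' + s *\<^sub>R D')" for s
    unfolding Kf_def harm_mean_def C'_def D'_def ..
  have sM: "sect t ((1 - s) *\<^sub>R A' + s *\<^sub>R B')" if "s \<in> {0..1}" for s
    using sect_comb[OF sA' sB'] that by auto
  have sN: "sect t ((1 - s) *\<^sub>R C' + s *\<^sub>R D')" if "s \<in> {0..1}" for s
    using sect_comb[OF sC' sD'] that by auto
  have iM: "((1 - s) *\<^sub>R A' + s *\<^sub>R B') ** Hf s = mat 1" if "s \<in> {0..1}" for s
    unfolding Hf_eq using sect_inv(1)[OF sM[OF that]] .
  have iN: "((1 - s) *\<^sub>R C' + s *\<^sub>R D') ** Kf s = mat 1" if "s \<in> {0..1}" for s
    unfolding Kf_eq using sect_inv(1)[OF sN[OF that]] .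
  have sH: "sect t (Hf s)" if "s \<in> {0..1}" for s
    unfolding Hf_eq using sect_inverse[OF sM[OF that]] .
  have cH: "continuous_on {0..1} Hf"
    unfolding Hf_eq[abs_def] by (rule continuous_inv_path) (use iM Hf_eq in simp)
  have cK: "continuous_on {0..1} Kf"
    unfolding Kf_eq[abs_def] by (rule continuous_inv_path) (use iN Kf_eq in simp)
  have intH: "integrable \<nu> Hf" by (rule integrable_cont[OF P S cH])
  have intK: "integrable \<nu> Kf" by (rule integrable_cont[OF P S cK])
  have sp: "space \<nu> = {0..1}" using sets_eq_imp_space_eq[OF S] by (simp add: space_restrict_space)
  define H where "H = matrix_mean \<nu> A B"
  define K where "K = matrix_mean \<nu> C D"
  have H_int: "H = (\<integral>s. Hf s \<partial>\<nu>)" unfolding H_def matrix_mean_def Hf_def ..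
  have K_int: "K = (\<integral>s. Kf s \<partial>\<nu>)" unfolding K_def matrix_mean_def Kf_def ..
  have intHxy: "integrable \<nu> (\<lambda>s. cinner (Hf s *v x) y)" for x y
    by (rule integrable_bounded_linear[OF bl_cinner intH])
  have intKxy: "integrable \<nu> (\<lambda>s. cinner (Kf s *v x) y)" for x y
    by (rule integrable_bounded_linear[OF bl_cinner intK])
  have Hxy: "cinner (H *v x) y = (\<integral>s. cinner (Hf s *v x) y \<partial>\<nu>)" for x y
    unfolding H_int by (rule integral_bounded_linear[OF bl_cinner intH, symmetric])
  have Kxy: "cinner (K *v x) y = (\<integral>s. cinner (Kf s *v x) y \<partial>\<nu>)" for x y
    unfolding K_int by (rule integral_bounded_linear[OF bl_cinner intK, symmetric])
  have intReH: "integrable \<nu> (\<lambda>s. Re (cinner (Hf s *v x) x))" for x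
    by (rule integrable_bounded_linear[OF bounded_linear_Re intHxy])
  have intReK: "integrable \<nu> (\<lambda>s. Re (cinner (Kf s *v x) x))" for x
    by (rule integrable_bounded_linear[OF bounded_linear_Re intKxy])
  have ReK: "Re (cinner (K *v x) x) = (\<integral>s. Re (cinner (Kf s *v x) x) \<partial>\<nu>)" for x
    unfolding Kxy by (rule integral_bounded_linear[OF bounded_linear_Re intKxy, symmetric])
  define W where "W = q_numerical_radius q K"
  have ReKW: "Re (cinner (K *v z) z) \<le> W / cmod q" if "norm z = 1" for z
  proof -
    have "cmod q * Re (cinner (K *v z) z) \<le> cmod q * cmod (cinner (K *v z) z)"
      using qpos by (intro mult_left_mono complex_Re_le_cmod) auto
    also have "\<dots> \<le> W" unfolding W_def by (rule qnr_lower[OF card that q1])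
    finally show ?thesis using qpos by (simp add: field_simps mult.commute)
  qed
  have pw: "Re (cinner (Hf s *v x) x) \<le> k * Re (cinner (Kf s *v x) x)" if "s \<in> {0..1}" for s x
    unfolding k_def
  proof (rule harm_ineq[OF sA sB t0 _ _ iA iB iC iD refl refl iM[OF that] iN[OF that]])
    show "0 \<le> s" "s \<le> 1" using that by auto
    show "Re (cinner (A *v v) v) \<le> Re (cinner (C *v v) v)" for v using loewner_Re[OF assms(16)] .
    show "Re (cinner (B *v v) v) \<le> Re (cinner (D *v v) v)" for v using loewner_Re[OF assms(17)] .
  qed
  have main: "cmod (cinner (H *v x) y) \<le> k * r * W / cmod q"
    if x: "norm x = 1" and y: "norm y = 1" for x y
  proof -
    have "cmod (cinner (H *v x) y) \<le> (\<integral>s. cmod (cinner (Hf s *v x) y) \<partial>\<nu>)"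
      unfolding Hxy by (rule integral_norm_bound)
    also have "\<dots> \<le> (\<integral>s. r / 2 * (Re (cinner (Hf s *v x) x) + Re (cinner (Hf s *v y) y)) \<partial>\<nu>)"
    proof (rule integral_mono)
      show "integrable \<nu> (\<lambda>s. cmod (cinner (Hf s *v x) y))" by (rule integrable_norm[OF intHxy])
      show "integrable \<nu> (\<lambda>s. r / 2 * (Re (cinner (Hf s *v x) x) + Re (cinner (Hf s *v y) y)))"
        by (intro integrable_mult_right Bochner_Integration.integrable_add intReH)
      fix s assume "s \<in> space \<nu>"
      then have "s \<in> {0..1}" using sp by simp
      then show "cmod (cinner (Hf s *v x) y) \<le> r / 2 * (Re (cinner (Hf s *v x) x) + Re (cinner (Hf s *v y) y))"
        unfolding r_def k_def using abs_bound[OF sH t0] by blast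
    qed
    also have "\<dots> \<le> (\<integral>s. r / 2 * (k * Re (cinner (Kf s *v x) x) + k * Re (cinner (Kf s *v y) y)) \<partial>\<nu>)"
    proof (rule integral_mono)
      show "integrable \<nu> (\<lambda>s. r / 2 * (Re (cinner (Hf s *v x) x) + Re (cinner (Hf s *v y) y)))"
        by (intro integrable_mult_right Bochner_Integration.integrable_add intReH)
      show "integrable \<nu> (\<lambda>s. r / 2 * (k * Re (cinner (Kf s *v x) x) + k * Re (cinner (Kf s *v y) y)))"
        by (intro integrable_mult_right Bochner_Integration.integrable_add intReK)
      fix s assume "s \<in> space \<nu>"
      then have s: "s \<in> {0..1}" using sp by simp
      show "r / 2 * (Re (cinner (Hf s *v x) x) + Re (cinner (Hf s *v y) y)) \<le> r / 2 * (k * Re (cinner (Kf s *v x) x) + k * Re (cinner (Kf s *v y) y))"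
        using pw[OF s, of x] pw[OF s, of y] r0 by (intro mult_left_mono add_mono) auto
    qed
    also have "\<dots> = r / 2 * (k * Re (cinner (K *v x) x) + k * Re (cinner (K *v y) y))"
      unfolding ReK using intReK by simp
    also have "\<dots> \<le> r / 2 * (k * (W / cmod q) + k * (W / cmod q))"
      using ReKW[OF x] ReKW[OF y] r0 k0 by (intro mult_left_mono add_mono) auto
    also have "\<dots> = k * r * W / cmod q" by simp
    finally show ?thesis .
  qed
  have "Sup (qset q H) \<le> k * r * W / cmod q"
  proof (rule cSup_least)
    show "qset q H \<noteq> {}" by (rule qset_nonempty[OF card q1])
    fix v assume "v \<in> qset q H"
    then show "v \<le> k * r * W / cmod q" unfolding qset_def using main by blast
  qed
  then have "cmod q * Sup (qset q H) \<le> cmod q * (k * r * W / cmod q)"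
    using qpos by (intro mult_left_mono) auto
  also have "\<dots> = (1 / cos \<alpha>) ^ 3 * W" using qpos sec by simp
  finally show ?thesis unfolding qnr_qset[symmetric] H_def W_def K_def .
qed

end
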